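(* For $\varepsilon\in(0,1)$, the set $S^A$ described below is a feasible solution of PKP with $\prod_{j\in S^A}p_j\ge(1-\varepsilon)z^*$, where $z^*$ is the optimal value of the PKP instance.
   Context: The Product Knapsack Problem (PKP): items $j\in N=\{1,\dots,n\}$ with integer weights $w_j$ and integer profits $p_j$, and a positive integer capacity $C$; find $S\subseteq N$ with $\sum_{j\in S}w_j\le C$ maximizing $\prod_{j\in S}p_j$ (the empty set has value $0$). Instances satisfy: (a) $w_j\le C$; (b) $p_j\ne 0$; (c) for each $j$ with $p_j<0$ there is $j'\ne j$ with $p_{j'}<0$ and $w_j+w_{j'}\le C$; (d) $w_j\ge 0$; (e) $p_j<0$ whenever $w_j=0$. Let $N^-=\{j:p_j\le -1\}$, $p_{\max}=\max_j|p_j|$, and assume $p_{\max}\ge 2$; $\log$ is base 2. Set $K=\varepsilon/n^2$ and scaled profits $\tilde p_j=\lfloor \log(|p_j|)/K\rfloor$. The set $S^A$ is computed by dynamic programming over the arrays $W^+_j(\tilde p)$, $W^-_j(\tilde p)$ (minimum total weight of a subset of $\{1,\dots,j\}$ with scaled-profit sum exactly $\tilde p$ and an even, resp. odd, number of items of $N^-$) and is the set represented by $W^+_n(\tilde p)$ for $\tilde p=\max\{\tilde p:W^+_n(\tilde p)\le C\}$; thus $S^A$ satisfies $\sum_{j\in S^A}w_j\le C$, $|S^A\cap N^-|$ is even, and $S^A$ maximizes $\sum_{j\in S}\tilde p_j$ among all such subsets $S\subseteq N$. *)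

theory Defs
  imports Complex_Main
begin

definition pkp_feasible :: "nat \<Rightarrow> (nat \<Rightarrow> int) \<Rightarrow> int \<Rightarrow> nat set \<Rightarrow> bool" where
  "pkp_feasible n w C S \<longleftrightarrow> S \<subseteq> {1..n} \<and> (\<Sum>j\<in>S. w j) \<le> C"

definition pkp_val :: "(nat \<Rightarrow> int) \<Rightarrow> nat set \<Rightarrow> int" where
  "pkp_val p S = (if S = {} then 0 else (\<Prod>j\<in>S. p j))"

definition pkp_opt :: "nat \<Rightarrow> (nat \<Rightarrow> int) \<Rightarrow> (nat \<Rightarrow> int) \<Rightarrow> int \<Rightarrow> int" where
  "pkp_opt n w p C = Max (pkp_val p ` {S. pkp_feasible n w C S})"

definition neg_items :: "nat \<Rightarrow> (nat \<Rightarrow> int) \<Rightarrow> nat set" where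
  "neg_items n p = {j \<in> {1..n}. p j \<le> -1}"

definition scaled_profit :: "nat \<Rightarrow> real \<Rightarrow> (nat \<Rightarrow> int) \<Rightarrow> nat \<Rightarrow> int" where
  "scaled_profit n eps p j = \<lfloor>log 2 \<bar>real_of_int (p j)\<bar> / (eps / (real n)^2)\<rfloor>"

end

theory Submission imports Defs begin

lemma prod_sign:
  fixes p :: "nat \<Rightarrow> int"
  assumes "finite S"
  shows "prod p S = (-1) ^ card (S \<inter> {j. p j < 0}) * prod (\<lambda>j. \<bar>p j\<bar>) S"
proof -
  let ?N = "{j. p j < 0}"
  have "prod p S = prod p (S \<inter> ?N) * prod p (S - ?N)" using prod.Int_Diff[OF assms] by blast
  also have "prod p (S \<inter> ?N) = prod (\<lambda>j. - \<bar>p j\<bar>) (S \<inter> ?N)" by (rule prod.cong) auto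
  also have "\<dots> = (-1) ^ card (S \<inter> ?N) * prod (\<lambda>j. \<bar>p j\<bar>) (S \<inter> ?N)"
    by (simp add: prod_uminus) 
  also have "prod p (S - ?N) = prod (\<lambda>j. \<bar>p j\<bar>) (S - ?N)" by (rule prod.cong) auto
  finally show ?thesis using prod.Int_Diff[OF assms, of "\<lambda>j. \<bar>p j\<bar>" ?N] by (simp add: mult.assoc)
qed

lemma prod_abs_powr:
  fixes p :: "nat \<Rightarrow> int"
  assumes "\<forall>j\<in>S. p j \<noteq> 0"
  shows "real_of_int (prod (\<lambda>j. \<bar>p j\<bar>) S) = 2 powr (\<Sum>j\<in>S. log 2 \<bar>real_of_int (p j)\<bar>)"
  using assms by (simp add: powr_sum)

lemma powr_bound:
  fixes x :: real assumes "0 \<le> x"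
  shows "1 - x \<le> 2 powr (- x)"
proof -
  have "2 powr (-x) = exp (- x * ln 2)" by (simp add: powr_def)
  also have "\<dots> \<ge> 1 + (- x * ln 2)" by (rule exp_ge_add_one_self)
  finally have "1 - x * ln 2 \<le> 2 powr (-x)" by simp
  moreover have "x * ln 2 \<le> x" using assms ln_2_less_1 by (simp add: mult_left_le)
  ultimately show ?thesis by linarith
qed

lemma sum_bounds:
  fixes p :: "nat \<Rightarrow> int" and K :: real
  assumes K: "K = eps / (real n)^2" "K > 0" and S: "finite S" and nz: "\<forall>j\<in>S. p j \<noteq> 0"
  shows "K * real_of_int (\<Sum>j\<in>S. scaled_profit n eps p j) \<le> (\<Sum>j\<in>S. log 2 \<bar>real_of_int (p j)\<bar>)"
    and "(\<Sum>j\<in>S. log 2 \<bar>real_of_int (p j)\<bar>) \<le> K * real_of_int (\<Sum>j\<in>S. scaled_profit n eps p j) + K * card S"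
proof -
  have t: "K * real_of_int (scaled_profit n eps p j) \<le> log 2 \<bar>real_of_int (p j)\<bar> \<and>
       log 2 \<bar>real_of_int (p j)\<bar> \<le> K * real_of_int (scaled_profit n eps p j) + K" for j
  proof -
    let ?x = "log 2 \<bar>real_of_int (p j)\<bar> / K"
    have sp: "scaled_profit n eps p j = \<lfloor>?x\<rfloor>" unfolding scaled_profit_def K(1) by simp
    have "real_of_int \<lfloor>?x\<rfloor> \<le> ?x" "?x \<le> real_of_int \<lfloor>?x\<rfloor> + 1" by linarith+
    then have i1: "K * real_of_int \<lfloor>?x\<rfloor> \<le> K * ?x" and i2: "K * ?x \<le> K * (real_of_int \<lfloor>?x\<rfloor> + 1)"
      using K(2) mult_left_mono less_imp_le by blast+
    have eq: "K * ?x = log 2 \<bar>real_of_int (p j)\<bar>" using K(2) by simp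
    have i3: "K * (real_of_int \<lfloor>?x\<rfloor> + 1) = K * real_of_int \<lfloor>?x\<rfloor> + K"
      by (metis distrib_left mult.right_neutral)
    show ?thesis unfolding sp using i1 i2 i3 eq by linarith
  qed
  show "K * real_of_int (\<Sum>j\<in>S. scaled_profit n eps p j) \<le> (\<Sum>j\<in>S. log 2 \<bar>real_of_int (p j)\<bar>)"
    unfolding of_int_sum sum_distrib_left by (rule sum_mono) (use t in blast)
  have "(\<Sum>j\<in>S. log 2 \<bar>real_of_int (p j)\<bar>) \<le> (\<Sum>j\<in>S. K * real_of_int (scaled_profit n eps p j) + K)"
    by (rule sum_mono) (use t in blast)
  then show "(\<Sum>j\<in>S. log 2 \<bar>real_of_int (p j)\<bar>) \<le> K * real_of_int (\<Sum>j\<in>S. scaled_profit n eps p j) + K * card S"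
    by (simp add: sum.distrib of_int_sum sum_distrib_left mult.commute)
qed

theorem proposition2:
  fixes n :: nat and w p :: "nat \<Rightarrow> int" and C :: int and eps :: real
    and SA :: "nat set"
  assumes C_pos: "C > 0"
    and a: "\<forall>j\<in>{1..n}. w j \<le> C"
    and b: "\<forall>j\<in>{1..n}. p j \<noteq> 0"
    and c: "\<forall>j\<in>{1..n}. p j < 0 \<longrightarrow>
              (\<exists>j'\<in>{1..n}. j' \<noteq> j \<and> p j' < 0 \<and> w j + w j' \<le> C)"
    and d: "\<forall>j\<in>{1..n}. w j \<ge> 0"
    and e: "\<forall>j\<in>{1..n}. w j = 0 \<longrightarrow> p j < 0"
    and pmax: "Max ((\<lambda>j. \<bar>p j\<bar>) ` {1..n}) \<ge> 2" and n_pos: "n \<ge> 1"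
    and eps: "0 < eps" "eps < 1"
    and SA_feas: "pkp_feasible n w C SA"
    and SA_even: "even (card (SA \<inter> neg_items n p))"
    and SA_max: "\<forall>S. pkp_feasible n w C S \<and> even (card (S \<inter> neg_items n p)) \<longrightarrow>
                  (\<Sum>j\<in>S. scaled_profit n eps p j) \<le> (\<Sum>j\<in>SA. scaled_profit n eps p j)"
  shows "pkp_feasible n w C SA \<and>
         real_of_int (pkp_val p SA) \<ge> (1 - eps) * real_of_int (pkp_opt n w p C)"
proof -
  define F where "F = {S. pkp_feasible n w C S}"
  define z where "z = pkp_opt n w p C"
  define lg where "lg = (\<lambda>S. \<Sum>j\<in>S. log 2 \<bar>real_of_int (p j)\<bar>)"
  define K where "K = eps / (real n)^2"
  have Kpos: "K > 0" using eps n_pos unfolding K_def by simp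
  have nK: "K * real n \<le> eps"
  proof -
    have "K * real n = eps / real n" unfolding K_def using n_pos by (simp add: power2_eq_square)
    also have "\<dots> \<le> eps" using n_pos eps by (simp add: divide_le_eq_1 field_simps)
    finally show ?thesis .
  qed
  have finF: "finite F" unfolding F_def pkp_feasible_def
    by (rule finite_subset[of _ "Pow {1..n}"]) auto
  have negeq: "S \<inter> neg_items n p = S \<inter> {j. p j < 0}" if "S \<subseteq> {1..n}" for S
    using that unfolding neg_items_def by auto
  have zmax: "pkp_val p S \<le> z" if "pkp_feasible n w C S" for S
    unfolding z_def pkp_opt_def using finF that F_def by (intro Max_ge) auto
  have z2: "z \<ge> 2"
  proof -
    have "(\<lambda>j. \<bar>p j\<bar>) ` {1..n} \<noteq> {}" using n_pos by auto
    from Max_in[OF _ this] obtain j0 where j0: "j0 \<in> {1..n}" "\<bar>p j0\<bar> = Max ((\<lambda>j. \<bar>p j\<bar>) ` {1..n})"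
      by auto
    show ?thesis
    proof (cases "p j0 < 0")
      case True
      with c j0 obtain j' where j': "j' \<in> {1..n}" "j' \<noteq> j0" "p j' < 0" "w j0 + w j' \<le> C" by blast
      have "pkp_feasible n w C {j0, j'}" unfolding pkp_feasible_def using j0 j' by auto
      hence "pkp_val p {j0, j'} \<le> z" by (rule zmax)
      moreover have "pkp_val p {j0, j'} = p j0 * p j'" unfolding pkp_val_def using j' by simp
      moreover have "p j0 * p j' \<ge> 2"
      proof -
        have "p j0 * p j' = \<bar>p j0\<bar> * \<bar>p j'\<bar>" using True j' by (simp add: abs_mult[symmetric] abs_of_pos)
        moreover have "\<bar>p j0\<bar> \<ge> 2" "\<bar>p j'\<bar> \<ge> 1" using j0 pmax j' by auto
        ultimately show ?thesis by (metis mult_mono' mult.right_neutral order_trans abs_ge_zero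
              mult_left_mono zero_le_numeral)
      qed
      ultimately show ?thesis by simp
    next
      case False
      have "pkp_feasible n w C {j0}" unfolding pkp_feasible_def using j0 a by auto
      hence "pkp_val p {j0} \<le> z" by (rule zmax)
      moreover have "pkp_val p {j0} = p j0" unfolding pkp_val_def by simp
      moreover have "p j0 \<ge> 2" using False j0 pmax by simp
      ultimately show ?thesis by linarith
    qed
  qed
  have "F \<noteq> {}" using C_pos unfolding F_def pkp_feasible_def by auto
  hence "z \<in> pkp_val p ` F" unfolding z_def pkp_opt_def F_def[symmetric] using finF by (intro Max_in) auto
  then obtain Sopt where So: "pkp_feasible n w C Sopt" "pkp_val p Sopt = z" unfolding F_def by auto
  have Sosub: "Sopt \<subseteq> {1..n}" and finSo: "finite Sopt" using So(1) unfolding pkp_feasible_def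
    by (auto intro: finite_subset)
  have Sone: "Sopt \<noteq> {}" using So z2 unfolding pkp_val_def by auto
  have zprod: "prod p Sopt = z" using So(2) Sone unfolding pkp_val_def by simp
  have "(-1::int) ^ card (Sopt \<inter> {j. p j < 0}) * prod (\<lambda>j. \<bar>p j\<bar>) Sopt = z"
    using prod_sign[OF finSo, of p] zprod by simp
  moreover have "prod (\<lambda>j. \<bar>p j\<bar>) Sopt \<ge> 0" by (simp add: prod_nonneg)
  ultimately have evSo: "even (card (Sopt \<inter> {j. p j < 0}))"
  proof -
    show ?thesis
  proof (rule ccontr)
    assume od: "odd (card (Sopt \<inter> {j. p j < 0}))"
    have "z = - prod (\<lambda>j. \<bar>p j\<bar>) Sopt"
      using \<open>(-1::int) ^ _ * _ = z\<close> od by simp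
    thus False using \<open>prod (\<lambda>j. \<bar>p j\<bar>) Sopt \<ge> 0\<close> z2 by linarith
  qed
  qed
  hence zabs: "prod (\<lambda>j. \<bar>p j\<bar>) Sopt = z"
    using \<open>(-1::int) ^ _ * _ = z\<close> by simp
  have nzSo: "\<forall>j\<in>Sopt. p j \<noteq> 0" using b Sosub by auto
  have lgSo: "real_of_int z = 2 powr lg Sopt"
    using prod_abs_powr[OF nzSo] zabs unfolding lg_def by simp
  have SAsub: "SA \<subseteq> {1..n}" and finSA: "finite SA" using SA_feas unfolding pkp_feasible_def
    by (auto intro: finite_subset)
  have nzSA: "\<forall>j\<in>SA. p j \<noteq> 0" using b SAsub by auto
  have cmp: "(\<Sum>j\<in>Sopt. scaled_profit n eps p j) \<le> (\<Sum>j\<in>SA. scaled_profit n eps p j)"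
    using SA_max So(1) evSo negeq[OF Sosub] by auto
  have cardSo: "card Sopt \<le> n" using card_mono[OF _ Sosub] by simp
  have "lg Sopt \<le> K * real_of_int (\<Sum>j\<in>Sopt. scaled_profit n eps p j) + K * card Sopt"
    using sum_bounds(2)[OF K_def Kpos finSo nzSo] unfolding lg_def .
  also have "\<dots> \<le> K * real_of_int (\<Sum>j\<in>SA. scaled_profit n eps p j) + K * real n"
    using cmp cardSo Kpos by (intro add_mono mult_left_mono) (simp_all only: of_int_le_iff of_nat_le_iff less_imp_le)
  also have "\<dots> \<le> lg SA + eps"
    using sum_bounds(1)[OF K_def Kpos finSA nzSA] nK unfolding lg_def by linarith
  finally have key: "lg Sopt - eps \<le> lg SA" by simp
  have "lg Sopt \<ge> 1"
  proof -
    have "2 powr lg Sopt \<ge> 2 powr 1" using lgSo z2 by simp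
    thus ?thesis using powr_le_cancel_iff[of 2 1 "lg Sopt"] by simp
  qed
  hence SAne: "SA \<noteq> {}" using key eps unfolding lg_def by auto
  have "prod p SA = prod (\<lambda>j. \<bar>p j\<bar>) SA"
    using prod_sign[OF finSA, of p] SA_even negeq[OF SAsub] by simp
  hence valSA: "real_of_int (pkp_val p SA) = 2 powr lg SA"
    using SAne prod_abs_powr[OF nzSA] unfolding pkp_val_def lg_def by simp
  have "(1 - eps) * real_of_int z \<le> 2 powr (- eps) * 2 powr lg Sopt"
    unfolding lgSo[symmetric]
    using powr_bound[of eps] eps z2 by (intro mult_right_mono) auto
  also have "\<dots> = 2 powr (lg Sopt - eps)" by (simp add: powr_add[symmetric])
  also have "\<dots> \<le> 2 powr lg SA" using key by simp
  finally show ?thesis using SA_feas valSA unfolding z_def by simp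
qed

end
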